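(* Let $\varepsilon<\frac1{4\sqrt2}$ and let $|\nu\rangle=\frac1{\sqrt2}\big(|0^n\rangle|\psi_0\rangle+|1^n\rangle|\psi_1\rangle\big)$ be an $n$-nekomata state, where $|\psi_0\rangle,|\psi_1\rangle$ are arbitrary states on the same number of qubits. Then $\deg_\varepsilon(|\nu\rangle\langle\nu|)\ge n$. In particular, for the cat state $|\mathrm{Cat}_n\rangle=\frac1{\sqrt2}(|0^n\rangle+|1^n\rangle)$, $\deg_\varepsilon(|\mathrm{Cat}_n\rangle\langle\mathrm{Cat}_n|)\ge n$.
   Context: Pauli degree: with $P_\sigma=\bigotimes_iP_{\sigma_i}$, $P_0=I,P_1=X,P_2=Y,P_3=Z$, every $2^m\times2^m$ matrix is $A=\sum_\sigma\hat A(\sigma)P_\sigma$, $\deg(A)=\max\{|\{i:\sigma_i\ne0\}|:\hat A(\sigma)\ne0\}$, and $\deg_\varepsilon(A)=\min\{\deg(B):\|A-B\|\le\varepsilon\}$ with $\|\cdot\|$ the spectral norm. *)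

theory Defs
  imports "HOL-Analysis.Analysis" "HOL-Library.Extended_Nat"
begin

text \<open>Computational basis of m qubits: bit strings of length m (qubit i is the i-th
  tensor factor). A 2^m x 2^m matrix is a function on pairs of basis strings; only its
  values on bit strings of length m matter.\<close>

definition bits :: "nat \<Rightarrow> bool list set" where
  "bits m = {xs. length xs = m}"

definition vnorm :: "nat \<Rightarrow> (bool list \<Rightarrow> complex) \<Rightarrow> real" where
  "vnorm m v = sqrt (\<Sum>x\<in>bits m. (cmod (v x))\<^sup>2)"

definition mat_vec :: "nat \<Rightarrow> (bool list \<Rightarrow> bool list \<Rightarrow> complex) \<Rightarrow> (bool list \<Rightarrow> complex) \<Rightarrow> (bool list \<Rightarrow> complex)" where
  "mat_vec m A v = (\<lambda>x. \<Sum>y\<in>bits m. A x y * v y)"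

definition spec_norm :: "nat \<Rightarrow> (bool list \<Rightarrow> bool list \<Rightarrow> complex) \<Rightarrow> real" where
  "spec_norm m A = (SUP v\<in>{v. vnorm m v = 1}. vnorm m (mat_vec m A v))"

text \<open>Single-qubit Pauli matrices P_0 = I, P_1 = X, P_2 = Y, P_3 = Z;
  entry (row x, column y), with False = |0>, True = |1>.\<close>

definition pauli1 :: "nat \<Rightarrow> bool \<Rightarrow> bool \<Rightarrow> complex" where
  "pauli1 s x y =
     (if s = 0 then (if x = y then 1 else 0)
      else if s = 1 then (if x \<noteq> y then 1 else 0)
      else if s = 2 then (if x = False \<and> y = True then - \<i> else if x = True \<and> y = False then \<i> else 0)
      else (if x = y then (if x then -1 else 1) else 0))"

definition pauli_strings :: "nat \<Rightarrow> nat list set" where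
  "pauli_strings m = {\<sigma>. length \<sigma> = m \<and> (\<forall>s\<in>set \<sigma>. s < 4)}"

definition pauli_weight :: "nat list \<Rightarrow> nat" where
  "pauli_weight \<sigma> = length (filter (\<lambda>s. s \<noteq> 0) \<sigma>)"

definition pauli_mat :: "nat list \<Rightarrow> bool list \<Rightarrow> bool list \<Rightarrow> complex" where
  "pauli_mat \<sigma> x y = (\<Prod>i<length \<sigma>. pauli1 (\<sigma> ! i) (x ! i) (y ! i))"

text \<open>Pauli (Fourier) coefficient: the unique coefficients in A = sum_sigma hat A(sigma) P_sigma,
  hat A(sigma) = 2^{-m} tr(P_sigma^dagger A).\<close>

definition pauli_coeff :: "nat \<Rightarrow> (bool list \<Rightarrow> bool list \<Rightarrow> complex) \<Rightarrow> nat list \<Rightarrow> complex" where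
  "pauli_coeff m A \<sigma> =
     (\<Sum>x\<in>bits m. \<Sum>y\<in>bits m. cnj (pauli_mat \<sigma> x y) * A x y) / 2 ^ m"

text \<open>Pauli degree (degree of the zero matrix taken to be 0).\<close>

definition pauli_deg :: "nat \<Rightarrow> (bool list \<Rightarrow> bool list \<Rightarrow> complex) \<Rightarrow> nat" where
  "pauli_deg m A =
     Max (insert 0 {pauli_weight \<sigma> | \<sigma>. \<sigma> \<in> pauli_strings m \<and> pauli_coeff m A \<sigma> \<noteq> 0})"

text \<open>Approximate Pauli degree: min over B with ||A - B|| <= eps (infinity if no such B).\<close>

definition approx_pauli_deg :: "nat \<Rightarrow> real \<Rightarrow> (bool list \<Rightarrow> bool list \<Rightarrow> complex) \<Rightarrow> enat" where
  "approx_pauli_deg m \<epsilon> A =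
     (INF B\<in>{B. spec_norm m (\<lambda>x y. A x y - B x y) \<le> \<epsilon>}. enat (pauli_deg m B))"

definition proj :: "(bool list \<Rightarrow> complex) \<Rightarrow> bool list \<Rightarrow> bool list \<Rightarrow> complex" where
  "proj v = (\<lambda>x y. v x * cnj (v y))"

definition nekomata :: "nat \<Rightarrow> (bool list \<Rightarrow> complex) \<Rightarrow> (bool list \<Rightarrow> complex) \<Rightarrow> bool list \<Rightarrow> complex" where
  "nekomata n \<psi>0 \<psi>1 xs =
     ((if take n xs = replicate n False then \<psi>0 (drop n xs) else 0)
      + (if take n xs = replicate n True then \<psi>1 (drop n xs) else 0)) / complex_of_real (sqrt 2)"

definition cat_state :: "nat \<Rightarrow> bool list \<Rightarrow> complex" where
  "cat_state n xs =
     ((if xs = replicate n False then 1 else 0) + (if xs = replicate n True then 1 else 0))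
       / complex_of_real (sqrt 2)"

end

theory Submission
  imports Defs
begin

lemma finite_bits: "finite (bits m)"
  unfolding bits_def using finite_lists_length_eq[of "UNIV::bool set" m] by simp

lemma finite_pauli_strings: "finite (pauli_strings m)"
proof -
  have "pauli_strings m = {xs. set xs \<subseteq> {..<4} \<and> length xs = m}"
    unfolding pauli_strings_def by auto
  thus ?thesis using finite_lists_length_eq[of "{..<4::nat}" m] by simp
qed

lemma bits_Suc: "bits (Suc m) = (\<lambda>(a,x). a#x) ` (UNIV \<times> bits m)"
  unfolding bits_def by (auto simp: length_Suc_conv image_iff)

lemma strings_Suc: "pauli_strings (Suc m) = (\<lambda>(s,\<sigma>). s#\<sigma>) ` ({..<4} \<times> pauli_strings m)"
  unfolding pauli_strings_def by (auto simp: length_Suc_conv image_iff)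

lemma pauli_mat_Cons: "pauli_mat (s#\<sigma>) (a#x) (b#y) = pauli1 s a b * pauli_mat \<sigma> x y"
  unfolding pauli_mat_def length_Cons prod.lessThan_Suc_shift by simp

lemma pauli1_orth:
  "(\<Sum>s<4. pauli1 s a b * cnj (pauli1 s a' b')) = (if a = a' \<and> b = b' then 2 else 0)"
proof -
  have e: "{..<4::nat} = {0,1,2,3}" by auto
  show ?thesis unfolding e
    by (cases a; cases b; cases a'; cases b') (simp_all add: pauli1_def)
qed

lemma bits_Cons: "x \<in> bits (Suc m) \<Longrightarrow> \<exists>a xs. x = a#xs \<and> xs \<in> bits m"
  by (auto simp: bits_def length_Suc_conv)

lemma orth: "x \<in> bits m \<Longrightarrow> y \<in> bits m \<Longrightarrow> x' \<in> bits m \<Longrightarrow> y' \<in> bits m \<Longrightarrow>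
  (\<Sum>\<sigma>\<in>pauli_strings m. pauli_mat \<sigma> x y * cnj (pauli_mat \<sigma> x' y'))
   = (if x = x' \<and> y = y' then 2^m else 0)"
proof (induction m arbitrary: x y x' y')
  case 0
  then have "x = []" "y=[]" "x'=[]" "y'=[]" by (auto simp: bits_def)
  moreover have "pauli_strings 0 = {[]}" by (auto simp: pauli_strings_def)
  ultimately show ?case by (simp add: pauli_mat_def)
next
  case (Suc m)
  from bits_Cons[OF Suc.prems(1)] obtain a xs where x: "x = a#xs" "xs \<in> bits m" by blast
  from bits_Cons[OF Suc.prems(2)] obtain b ys where y: "y = b#ys" "ys \<in> bits m" by blast
  from bits_Cons[OF Suc.prems(3)] obtain a' xs' where x': "x' = a'#xs'" "xs' \<in> bits m" by blast
  from bits_Cons[OF Suc.prems(4)] obtain b' ys' where y': "y' = b'#ys'" "ys' \<in> bits m" by blast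
  have inj: "inj_on (\<lambda>(s,\<sigma>). s#\<sigma>) ({..<4::nat} \<times> pauli_strings m)" by (auto simp: inj_on_def)
  have "(\<Sum>\<sigma>\<in>pauli_strings (Suc m). pauli_mat \<sigma> x y * cnj (pauli_mat \<sigma> x' y'))
      = (\<Sum>(s,\<sigma>)\<in>{..<4} \<times> pauli_strings m. pauli_mat (s#\<sigma>) x y * cnj (pauli_mat (s#\<sigma>) x' y'))"
    unfolding strings_Suc by (subst sum.reindex[OF inj]) (simp add: case_prod_unfold)
  also have "\<dots> = (\<Sum>s<4. \<Sum>\<sigma>\<in>pauli_strings m. (pauli1 s a b * cnj (pauli1 s a' b')) *
                 (pauli_mat \<sigma> xs ys * cnj (pauli_mat \<sigma> xs' ys')))"
    by (subst sum.cartesian_product[symmetric]) (simp add: x y x' y' pauli_mat_Cons mult_ac)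
  also have "\<dots> = (\<Sum>s<4. pauli1 s a b * cnj (pauli1 s a' b')) *
                 (\<Sum>\<sigma>\<in>pauli_strings m. pauli_mat \<sigma> xs ys * cnj (pauli_mat \<sigma> xs' ys'))"
    by (simp only: sum_product)
  also have "\<dots> = (if x = x' \<and> y = y' then 2^Suc m else 0)"
    unfolding pauli1_orth Suc.IH[OF x(2) y(2) x'(2) y'(2)] by (simp add: x y x' y')
  finally show ?case .
qed

lemma expansion:
  assumes "x \<in> bits m" "y \<in> bits m"
  shows "B x y = (\<Sum>\<sigma>\<in>pauli_strings m. pauli_coeff m B \<sigma> * pauli_mat \<sigma> x y)"
proof -
  have "(\<Sum>\<sigma>\<in>pauli_strings m. pauli_coeff m B \<sigma> * pauli_mat \<sigma> x y)
     = (\<Sum>\<sigma>\<in>pauli_strings m. \<Sum>x'\<in>bits m. \<Sum>y'\<in>bits m.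
          B x' y' * (pauli_mat \<sigma> x y * cnj (pauli_mat \<sigma> x' y')) / 2^m)"
    unfolding pauli_coeff_def
    by (intro sum.cong refl) (simp add: sum_divide_distrib sum_distrib_left mult_ac)
  also have "\<dots> = (\<Sum>x'\<in>bits m. \<Sum>y'\<in>bits m. B x' y' *
          (\<Sum>\<sigma>\<in>pauli_strings m. pauli_mat \<sigma> x y * cnj (pauli_mat \<sigma> x' y')) / 2^m)"
  proof -
    have "(\<Sum>\<sigma>\<in>pauli_strings m. \<Sum>x'\<in>bits m. \<Sum>y'\<in>bits m.
          B x' y' * (pauli_mat \<sigma> x y * cnj (pauli_mat \<sigma> x' y')) / 2^m)
      = (\<Sum>x'\<in>bits m. \<Sum>\<sigma>\<in>pauli_strings m. \<Sum>y'\<in>bits m.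
          B x' y' * (pauli_mat \<sigma> x y * cnj (pauli_mat \<sigma> x' y')) / 2^m)"
      by (rule sum.swap)
    also have "\<dots> = (\<Sum>x'\<in>bits m. \<Sum>y'\<in>bits m. \<Sum>\<sigma>\<in>pauli_strings m.
          B x' y' * (pauli_mat \<sigma> x y * cnj (pauli_mat \<sigma> x' y')) / 2^m)"
      by (intro sum.cong refl sum.swap)
    finally show ?thesis by (simp add: sum_divide_distrib sum_distrib_left)
  qed
  also have "\<dots> = (\<Sum>x'\<in>bits m. \<Sum>y'\<in>bits m. if x = x' \<and> y = y' then B x y else 0)"
    by (intro sum.cong refl) (simp add: orth assms)
  also have "\<dots> = B x y"
  proof -
    have "\<And>x'. (\<Sum>y'\<in>bits m. if x = x' \<and> y = y' then B x y else 0) = (if x = x' then B x y else 0)"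
      subgoal for x' using assms(2) finite_bits by (cases "x = x'") (simp_all add: sum.delta)
      done
    then show ?thesis using assms(1) finite_bits by (simp add: sum.delta)
  qed
  finally show ?thesis by simp
qed

lemma key:
  assumes "pauli_deg m B < n" "n \<le> m" "x \<in> bits m" "y \<in> bits m"
    "take n x = replicate n False" "take n y = replicate n True"
  shows "B x y = 0"
proof -
  have fin: "finite {pauli_weight \<sigma> | \<sigma>. \<sigma> \<in> pauli_strings m \<and> pauli_coeff m B \<sigma> \<noteq> 0}"
    by (rule finite_subset[where B="pauli_weight ` pauli_strings m"]) (auto simp: finite_pauli_strings)
  have "pauli_coeff m B \<sigma> * pauli_mat \<sigma> x y = 0" if \<sigma>: "\<sigma> \<in> pauli_strings m" for \<sigma>
  proof (cases "pauli_coeff m B \<sigma> = 0")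
    case False
    then have "pauli_weight \<sigma> \<le> pauli_deg m B" unfolding pauli_deg_def using fin \<sigma>
      by (intro Max_ge) auto
    with assms have w: "pauli_weight \<sigma> < n" by simp
    have len: "length \<sigma> = m" using \<sigma> by (simp add: pauli_strings_def)
    have "\<exists>i<n. \<sigma>!i = 0"
    proof (rule ccontr)
      assume "\<not> ?thesis"
      then have "\<forall>s\<in>set (take n \<sigma>). s \<noteq> 0" by (auto simp: in_set_conv_nth)
      then have f: "filter (\<lambda>s. s \<noteq> 0) (take n \<sigma>) = take n \<sigma>" by (simp add: filter_id_conv)
      have "length (filter (\<lambda>s. s \<noteq> 0) \<sigma>) = length (filter (\<lambda>s. s \<noteq> 0) (take n \<sigma>))
          + length (filter (\<lambda>s. s \<noteq> 0) (drop n \<sigma>))"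
        by (metis append_take_drop_id filter_append length_append)
      also have "\<dots> \<ge> n" unfolding f using len assms(2) by simp
      finally have "n \<le> pauli_weight \<sigma>" unfolding pauli_weight_def .
      with w show False by simp
    qed
    then obtain i where i: "i<n" "\<sigma>!i = 0" by blast
    have xi: "x ! i = False"
      using assms(5) i(1) by (metis nth_take nth_replicate)
    have yi: "y ! i = True"
      using assms(6) i(1) by (metis nth_take nth_replicate)
    have "pauli_mat \<sigma> x y = 0" unfolding pauli_mat_def
      by (rule prod_zero) (use i xi yi len assms(2) in \<open>auto simp: pauli1_def intro!: bexI[of _ i]\<close>)
    then show ?thesis by simp
  qed simp
  then have "(\<Sum>\<sigma>\<in>pauli_strings m. pauli_coeff m B \<sigma> * pauli_mat \<sigma> x y) = 0"
    by (intro sum.neutral) blast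
  then show ?thesis using expansion[OF assms(3,4), of B] by simp
qed

lemma vnorm_one_bound: assumes "vnorm m v = 1" "y \<in> bits m" shows "cmod (v y) \<le> 1"
proof -
  have S: "(\<Sum>x\<in>bits m. (cmod (v x))\<^sup>2) = 1" using assms(1) unfolding vnorm_def by simp
  have "(cmod (v y))\<^sup>2 \<le> (\<Sum>x\<in>bits m. (cmod (v x))\<^sup>2)"
    by (rule member_le_sum) (use assms(2) finite_bits in auto)
  then have "(cmod (v y))\<^sup>2 \<le> 1\<^sup>2" using S by simp
  then show ?thesis by (rule power2_le_imp_le) simp
qed

lemma bdd: "bdd_above ((\<lambda>v. vnorm m (mat_vec m M v)) ` {v. vnorm m v = 1})"
proof (rule bdd_aboveI2)
  fix v assume "v \<in> {v. vnorm m v = 1}"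
  then have v: "vnorm m v = 1" by simp
  have "cmod (mat_vec m M v x) \<le> (\<Sum>y\<in>bits m. cmod (M x y))" for x
  proof -
    have "cmod (mat_vec m M v x) \<le> (\<Sum>y\<in>bits m. cmod (M x y * v y))"
      unfolding mat_vec_def by (rule norm_sum)
    also have "\<dots> \<le> (\<Sum>y\<in>bits m. cmod (M x y))"
    proof (rule sum_mono)
      fix y assume "y \<in> bits m"
      then have "cmod (v y) \<le> 1" using vnorm_one_bound[OF v] by simp
      then show "cmod (M x y * v y) \<le> cmod (M x y)"
        by (simp add: norm_mult mult_left_le)
    qed
    finally show ?thesis .
  qed
  then have "(\<Sum>x\<in>bits m. (cmod (mat_vec m M v x))\<^sup>2) \<le> (\<Sum>x\<in>bits m. (\<Sum>y\<in>bits m. cmod (M x y))\<^sup>2)"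
    by (intro sum_mono power_mono) auto
  then show "vnorm m (mat_vec m M v) \<le> sqrt (\<Sum>x\<in>bits m. (\<Sum>y\<in>bits m. cmod (M x y))\<^sup>2)"
    unfolding vnorm_def by (rule real_sqrt_le_mono)
qed

lemma spec_ge: "vnorm m v = 1 \<Longrightarrow> vnorm m (mat_vec m M v) \<le> spec_norm m M"
  unfolding spec_norm_def by (rule cSUP_upper) (use bdd in auto)

lemma block_sum:
  "(\<Sum>y\<in>bits (n+k). if take n y = replicate n c then f (drop n y) else 0) = (\<Sum>z\<in>bits k. f z)"
proof -
  have inj: "inj_on (\<lambda>z. replicate n c @ z) (bits k)" by (auto simp: inj_on_def)
  have img: "(\<lambda>z. replicate n c @ z) ` bits k = {y\<in>bits (n+k). take n y = replicate n c}"
  proof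
    show "(\<lambda>z. replicate n c @ z) ` bits k \<subseteq> {y\<in>bits (n+k). take n y = replicate n c}"
      by (auto simp: bits_def)
    show "{y\<in>bits (n+k). take n y = replicate n c} \<subseteq> (\<lambda>z. replicate n c @ z) ` bits k"
    proof
      fix y assume "y \<in> {y\<in>bits (n+k). take n y = replicate n c}"
      then have "y = replicate n c @ drop n y" "drop n y \<in> bits k"
        by (auto simp: bits_def) (metis append_take_drop_id)
      then show "y \<in> (\<lambda>z. replicate n c @ z) ` bits k" by blast
    qed
  qed
  have "(\<Sum>y\<in>bits (n+k). if take n y = replicate n c then f (drop n y) else 0)
      = (\<Sum>y\<in>{y\<in>bits (n+k). take n y = replicate n c}. f (drop n y))"
    by (simp add: sum.inter_filter finite_bits)
  also have "\<dots> = (\<Sum>z\<in>bits k. f (drop n (replicate n c @ z)))"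
    unfolding img[symmetric] by (subst sum.reindex[OF inj]) simp
  also have "\<dots> = (\<Sum>z\<in>bits k. f z)" by simp
  finally show ?thesis .
qed

lemma sqrt2_sq: "complex_of_real (sqrt 2) * complex_of_real (sqrt 2) = 2"
  by (simp flip: of_real_mult)

lemma main:
  assumes eps: "\<epsilon> < 1/2" and psi: "vnorm k \<psi>0 = 1" "vnorm k \<psi>1 = 1"
    and AA: "\<forall>x\<in>bits (n+k). \<forall>y\<in>bits (n+k). A x y = proj (nekomata n \<psi>0 \<psi>1) x y"
  shows "approx_pauli_deg (n+k) \<epsilon> A \<ge> enat n"
  unfolding approx_pauli_deg_def
proof (rule INF_greatest)
  fix B assume "B \<in> {B. spec_norm (n+k) (\<lambda>x y. A x y - B x y) \<le> \<epsilon>}"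
  then have sB: "spec_norm (n+k) (\<lambda>x y. A x y - B x y) \<le> \<epsilon>" by simp
  show "enat n \<le> enat (pauli_deg (n+k) B)"
  proof (rule ccontr)
    assume "\<not> ?thesis" then have d: "pauli_deg (n+k) B < n" by simp
    then have n0: "0 < n" by simp
    define w where "w y = (if take n y = replicate n True then \<psi>1 (drop n y) else 0)" for y
    have cs: "\<And>z. z * cnj z = (complex_of_real (cmod z))\<^sup>2"
      by (metis complex_norm_square of_real_power)
    define \<nu> where "\<nu> = nekomata n \<psi>0 \<psi>1"
    have S1: "(\<Sum>z\<in>bits k. (cmod (\<psi>1 z))\<^sup>2) = 1" using psi(2) unfolding vnorm_def by simp
    have S0: "(\<Sum>z\<in>bits k. (cmod (\<psi>0 z))\<^sup>2) = 1" using psi(1) unfolding vnorm_def by simp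
    have "\<And>y. (cmod (w y))\<^sup>2 = (if take n y = replicate n True then (cmod (\<psi>1 (drop n y)))\<^sup>2 else 0)"
      by (simp add: w_def)
    then have wn: "vnorm (n+k) w = 1"
      unfolding vnorm_def using block_sum[where n=n and k=k and c=True and f="\<lambda>z. (cmod (\<psi>1 z))\<^sup>2"] S1 by simp
    have neq: "replicate n True \<noteq> replicate n False" using n0 by (cases n) auto
    have nu1: "\<nu> y = \<psi>1 (drop n y) / complex_of_real (sqrt 2)" if "take n y = replicate n True" for y
      using neq that by (simp add: \<nu>_def nekomata_def)
    have nu0: "\<nu> y = \<psi>0 (drop n y) / complex_of_real (sqrt 2)" if "take n y = replicate n False" for y
      using neq that by (simp add: \<nu>_def nekomata_def)
    have "\<And>y. cnj (\<nu> y) * w y = (if take n y = replicate n True then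
              complex_of_real ((cmod (\<psi>1 (drop n y)))\<^sup>2) / complex_of_real (sqrt 2) else 0)"
      using cs by (simp add: w_def nu1 mult.commute)
    moreover have S1c: "(\<Sum>z\<in>bits k. (complex_of_real (cmod (\<psi>1 z)))\<^sup>2) = 1"
      using arg_cong[OF S1, of complex_of_real] by simp
    ultimately have inner: "(\<Sum>y\<in>bits (n+k). cnj (\<nu> y) * w y) = 1 / complex_of_real (sqrt 2)"
      using block_sum[where n=n and k=k and c=True and f="\<lambda>z. complex_of_real ((cmod (\<psi>1 z))\<^sup>2) / complex_of_real (sqrt 2)"]
      using S1c by (simp add: sum_divide_distrib[symmetric])
    have r: "mat_vec (n+k) (\<lambda>x y. A x y - B x y) w x = \<psi>0 (drop n x) / 2"
      if x: "x \<in> bits (n+k)" "take n x = replicate n False" for x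
    proof -
      have "mat_vec (n+k) (\<lambda>x y. A x y - B x y) w x = (\<Sum>y\<in>bits (n+k). \<nu> x * (cnj (\<nu> y) * w y))"
        unfolding mat_vec_def
      proof (intro sum.cong refl)
        fix y assume y: "y \<in> bits (n+k)"
        show "(A x y - B x y) * w y = \<nu> x * (cnj (\<nu> y) * w y)"
        proof (cases "take n y = replicate n True")
          case True
          then have "B x y = 0" using key[OF d _ x(1) y x(2)] by simp
          then show ?thesis using AA x(1) y by (simp add: proj_def \<nu>_def)
        next
          case False then show ?thesis by (simp add: w_def)
        qed
      qed
      also have "\<dots> = \<nu> x * (1 / complex_of_real (sqrt 2))"
        by (simp add: sum_distrib_left[symmetric] inner)
      also have "\<dots> = \<psi>0 (drop n x) / (complex_of_real (sqrt 2) * complex_of_real (sqrt 2))"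
        by (simp add: nu0[OF x(2)])
      also have "\<dots> = \<psi>0 (drop n x) / 2" by (simp only: sqrt2_sq)
      finally show ?thesis .
    qed
    have "(1/2)\<^sup>2 \<le> (\<Sum>x\<in>bits (n+k). (cmod (mat_vec (n+k) (\<lambda>x y. A x y - B x y) w x))\<^sup>2)"
    proof -
      have "(1/2::real)\<^sup>2 = (\<Sum>z\<in>bits k. (cmod (\<psi>0 z))\<^sup>2 / 4)"
        by (simp only: sum_divide_distrib[symmetric] S0) (simp add: power2_eq_square)
      also have "\<dots> = (\<Sum>x\<in>bits (n+k). if take n x = replicate n False then (cmod (\<psi>0 (drop n x)))\<^sup>2 / 4 else 0)"
        by (rule block_sum[symmetric])
      also have "\<dots> \<le> (\<Sum>x\<in>bits (n+k). (cmod (mat_vec (n+k) (\<lambda>x y. A x y - B x y) w x))\<^sup>2)"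
      proof (rule sum_mono)
        fix x assume x: "x \<in> bits (n+k)"
        show "(if take n x = replicate n False then (cmod (\<psi>0 (drop n x)))\<^sup>2 / 4 else 0)
              \<le> (cmod (mat_vec (n+k) (\<lambda>x y. A x y - B x y) w x))\<^sup>2"
        proof (cases "take n x = replicate n False")
          case True
          show ?thesis unfolding r[OF x True] using True by (simp add: norm_divide power_divide)
        qed simp
      qed
      finally show ?thesis .
    qed
    then have "1/2 \<le> vnorm (n+k) (mat_vec (n+k) (\<lambda>x y. A x y - B x y) w)"
      unfolding vnorm_def by (rule real_le_rsqrt)
    also have "\<dots> \<le> spec_norm (n+k) (\<lambda>x y. A x y - B x y)" by (rule spec_ge[OF wn])
    finally show False using sB eps by simp
  qed
qed

theorem corollary6p2:
  fixes \<epsilon> :: real and n k :: nat and \<psi>0 \<psi>1 :: "bool list \<Rightarrow> complex"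
  assumes "\<epsilon> < 1 / (4 * sqrt 2)"
    and "vnorm k \<psi>0 = 1" and "vnorm k \<psi>1 = 1"
  shows "approx_pauli_deg (n + k) \<epsilon> (proj (nekomata n \<psi>0 \<psi>1)) \<ge> enat n
         \<and> approx_pauli_deg n \<epsilon> (proj (cat_state n)) \<ge> enat n"
proof -
  have s: "1 \<le> sqrt (2::real)" by simp
  have "1 / (4 * sqrt 2) \<le> (1/2::real)"
    using s by (simp add: divide_simps) (use s in linarith)
  with assms(1) have eps: "\<epsilon> < 1/2" by linarith
  have b0: "bits 0 = {[]}" by (auto simp: bits_def)
  have one: "vnorm 0 (\<lambda>_. 1) = 1" by (simp add: vnorm_def b0)
  have "approx_pauli_deg (n + 0) \<epsilon> (proj (cat_state n)) \<ge> enat n"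
  proof (rule main[OF eps one one])
    show "\<forall>x\<in>bits (n+0). \<forall>y\<in>bits (n+0). proj (cat_state n) x y = proj (nekomata n (\<lambda>_. 1) (\<lambda>_. 1)) x y"
      by (auto simp: bits_def proj_def cat_state_def nekomata_def)
  qed
  then show ?thesis using main[OF eps assms(2,3)] by simp
qed

end
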